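(* Let $n\ge1$, $m\ge0$ be integers and $a,b>0$. For $s\in[0,a)$ let $I_{m,n,s}(x)=\int_s^x(1+t)^nt^m\,dt$, $\mu_s=\frac{(1+a)^na^mb+nI_{m,n-1,s}(a)}{I_{m,n,s}(a)}$ and $$\tilde\psi_s(x)=\frac{\mu_sI_{m,n,s}(x)-nI_{m,n-1,s}(x)}{(1+x)^nx^m},$$ which is the solution of $\psi'(x)+\psi(x)\big(\frac{n}{1+x}+\frac mx\big)=\mu_s-\frac{n}{1+x}$ with $\psi(s)=0$, $\psi(a)=b$. The following are equivalent: (1) $\mu_s(1+s)\ge n$; (2) $\tilde\psi_s(x)>0$ for all $x\in(s,a]$; (3) $\tilde\psi_s'(x)>0$ for all $x\in(s,a]$. Moreover, $\lim_{x\to s^+}\tilde\psi_s'(x)$ exists and is strictly positive if and only if $\mu_s(1+s)>n$. *)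

theory Defs
  imports "HOL-Analysis.Analysis"
begin

definition Iint :: "nat \<Rightarrow> nat \<Rightarrow> real \<Rightarrow> real \<Rightarrow> real" where
  "Iint m n s x = integral {s..x} (\<lambda>t. (1 + t) ^ n * t ^ m)"

definition mu :: "nat \<Rightarrow> nat \<Rightarrow> real \<Rightarrow> real \<Rightarrow> real \<Rightarrow> real" where
  "mu m n a b s = ((1 + a) ^ n * a ^ m * b + real n * Iint m (n - 1) s a) / Iint m n s a"

definition psi_tilde :: "nat \<Rightarrow> nat \<Rightarrow> real \<Rightarrow> real \<Rightarrow> real \<Rightarrow> real \<Rightarrow> real" where
  "psi_tilde m n a b s x =
     (mu m n a b s * Iint m n s x - real n * Iint m (n - 1) s x) / ((1 + x) ^ n * x ^ m)"

end

theory Submission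
  imports Defs
begin

lemma Iint_deriv_within:
  assumes "s \<le> x" "x \<le> b"
  shows "((\<lambda>y. Iint m k s y) has_real_derivative ((1+x)^k*x^m)) (at x within {s..b})"
  unfolding Iint_def
  by (rule integral_has_real_derivative) (use assms in \<open>auto intro!: continuous_intros\<close>)

lemma Iint_deriv_at:
  assumes "s < x"
  shows "((\<lambda>y. Iint m k s y) has_real_derivative ((1+x)^k*x^m)) (at x)"
proof -
  have "((\<lambda>y. Iint m k s y) has_real_derivative ((1+x)^k*x^m)) (at x within {s..x+1})"
    by (rule Iint_deriv_within) (use assms in auto)
  moreover have "at x within {s..x+1} = at x"
    by (rule at_within_Icc_at) (use assms in auto)
  ultimately show ?thesis by simp
qed

lemma Iint_cont: "continuous_on {s..b} (\<lambda>y. Iint m k s y)"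
  by (rule DERIV_continuous_on[OF Iint_deriv_within]) auto

lemma Iint_same: "Iint m k s s = 0"
  by (simp add: Iint_def)

lemma Iint_pos:
  assumes "0 \<le> s" "s < x"
  shows "Iint m k s x > 0"
proof -
  have "Iint m k s s < Iint m k s x"
  proof (rule DERIV_pos_imp_increasing_open[OF assms(2)])
    fix t assume "s < t" "t < x"
    then show "\<exists>y. ((\<lambda>y. Iint m k s y) has_real_derivative y) (at t) \<and> y > 0"
      using assms by (intro exI[of _ "(1+t)^k*t^m"] conjI Iint_deriv_at) auto
  qed (rule Iint_cont)
  then show ?thesis by (simp add: Iint_same)
qed

lemma alg1: fixes x P Q N nn mm :: real
  assumes "x>0" "P>0" "Q>0"
  shows "(N/(x*P))*x/Q*(nn/(1+x)) + mm*(N/(x*P)/Q) = N*(nn/(1+x)+mm/x)/(Q*P)"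
proof -
  have "(N/(x*P))*x/Q*(nn/(1+x)) = N*(nn/(1+x))/(Q*P)" using assms by (simp add: field_simps del: add_divide_distrib)
  moreover have "mm*(N/(x*P)/Q) = N*(mm/x)/(Q*P)" using assms by (simp add: field_simps)
  ultimately show ?thesis by (simp add: distrib_left add_divide_distrib)
qed

theorem lemma3p2:
  fixes n m :: nat and a b s :: real
  assumes "n \<ge> 1" and "a > 0" and "b > 0" and "0 \<le> s" and "s < a"
  shows "(mu m n a b s * (1 + s) \<ge> real n \<longleftrightarrow> (\<forall>x\<in>{s<..a}. psi_tilde m n a b s x > 0))
       \<and> ((\<forall>x\<in>{s<..a}. psi_tilde m n a b s x > 0) \<longleftrightarrow>
            (\<forall>x\<in>{s<..a}. deriv (psi_tilde m n a b s) x > 0))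
       \<and> ((\<exists>L. ((\<lambda>x. deriv (psi_tilde m n a b s) x) \<longlongrightarrow> L) (at_right s) \<and> L > 0)
            \<longleftrightarrow> mu m n a b s * (1 + s) > real n)"
proof -
  define \<mu> where "\<mu> = mu m n a b s"
  define w where "w = (\<lambda>x::real. (1+x)^n * x^m)"
  define q where "q = (\<lambda>x::real. \<mu> - n/(1+x))"
  define r where "r = (\<lambda>x::real. n/(1+x) + m/x)"
  define N where "N = (\<lambda>x. \<mu> * Iint m n s x - n * Iint m (n-1) s x)"
  define D where "D = (\<lambda>x. q x - N x * r x / w x)"
  have psi: "psi_tilde m n a b s = (\<lambda>x. N x / w x)"
    by (simp add: fun_eq_iff psi_tilde_def N_def w_def \<mu>_def)
  obtain n' where n': "n = Suc n'" using assms(1) by (cases n) auto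
  have wpos: "w x > 0" if "x > 0" for x using that by (simp add: w_def)
  have wder: "(w has_real_derivative w x * r x) (at x)" if "x > 0" for x
  proof -
    have "(w has_real_derivative (real n * (1+x)^(n-1) * x^m + (1+x)^n * (real m * x^(m-1)))) (at x)"
      unfolding w_def by (auto intro!: derivative_eq_intros)
    moreover have "real n * (1+x)^(n-1) * x^m + (1+x)^n * (real m * x^(m-1)) = w x * r x"
    proof -
      have e1: "w x * (n/(1+x)) = real n * (1+x)^(n-1) * x^m"
        using that by (simp add: w_def n' field_simps)
      have e2: "w x * (m/x) = (1+x)^n * (real m * x^(m-1))"
      proof (cases m)
        case 0 then show ?thesis by simp
      next
        case (Suc m') then show ?thesis using that by (simp add: w_def field_simps)
      qed
      show ?thesis unfolding r_def distrib_left e1 e2 by simp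
    qed
    ultimately show ?thesis by simp
  qed
  have Nder: "(N has_real_derivative w x * q x) (at x)" if "x > s" for x
  proof -
    have "(N has_real_derivative \<mu> * ((1+x)^n*x^m) - n * ((1+x)^(n-1)*x^m)) (at x)"
      unfolding N_def using that by (auto intro!: derivative_eq_intros Iint_deriv_at)
    moreover have "\<mu> * ((1+x)^n*x^m) - n * ((1+x)^(n-1)*x^m) = w x * q x"
      using that assms by (simp add: w_def q_def n' field_simps)
    ultimately show ?thesis by simp
  qed
  have Ncont: "continuous_on {s..c} N" for c
    unfolding N_def by (intro continuous_intros Iint_cont)
  have N0: "N s = 0" by (simp add: N_def Iint_same)
  have mupos: "\<mu> > 0"
  proof -
    have "Iint m n s a > 0" "Iint m (n-1) s a > 0" using assms by (auto intro: Iint_pos)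
    then show ?thesis using assms unfolding \<mu>_def mu_def
      by (intro divide_pos_pos add_pos_nonneg) auto
  qed
  have psider: "deriv (psi_tilde m n a b s) x = D x" if "x > s" for x
  proof -
    have x0: "x > 0" using that assms by linarith
    have "((\<lambda>x. N x / w x) has_real_derivative (w x * q x * w x - N x * (w x * r x)) / (w x * w x)) (at x)"
      by (rule DERIV_divide[OF Nder[OF that] wder[OF x0]]) (use wpos[OF x0] in simp)
    moreover have "(w x * q x * w x - N x * (w x * r x)) / (w x * w x) = D x"
      using wpos[OF x0] by (simp add: D_def field_simps)
    ultimately show ?thesis unfolding psi by (metis DERIV_imp_deriv)
  qed
  define L0 where "L0 = (if s > 0 \<or> m = 0 then q s else (\<mu> - n) / (m + 1))"
  have L0pos: "L0 > 0 \<longleftrightarrow> \<mu> * (1 + s) > n" and L0nn: "L0 \<ge> 0 \<longleftrightarrow> \<mu> * (1 + s) \<ge> n"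
    using assms by (auto simp: L0_def q_def field_simps)
  have Dlim: "(D \<longlongrightarrow> L0) (at_right s)"
  proof (cases "s > 0 \<or> m = 0")
    case True
    have Nl: "(N \<longlongrightarrow> 0) (at_right s)"
      using continuous_on_Icc_at_rightD[OF Ncont assms(5)] N0 by simp
    have ql: "(q \<longlongrightarrow> q s) (at_right s)"
      unfolding q_def using assms by (auto intro!: tendsto_eq_intros)
    have rl: "((\<lambda>x. real m / x) \<longlongrightarrow> real m / s) (at_right s)"
      using True by (cases "m = 0") (auto intro!: tendsto_eq_intros)
    have rl': "(r \<longlongrightarrow> r s) (at_right s)"
      unfolding r_def using assms by (auto intro!: tendsto_intros rl)
    have wl: "(w \<longlongrightarrow> w s) (at_right s)"
      unfolding w_def by (auto intro!: tendsto_eq_intros)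
    have ws: "w s \<noteq> 0" using True assms by (auto simp: w_def)
    have "(D \<longlongrightarrow> q s - 0 * r s / w s) (at_right s)"
      unfolding D_def by (intro tendsto_intros ql Nl rl' wl ws)
    then show ?thesis using True by (simp add: L0_def)
  next
    case False
    then have s0: "s = 0" and m0: "m > 0" using assms by auto
    define K where "K = (\<lambda>x. N x / x ^ Suc m)"
    have Kl: "(K \<longlongrightarrow> (\<mu> - n) / (m + 1)) (at_right 0)"
      unfolding K_def
    proof (rule lhopital_right_0[where f'="\<lambda>x. w x * q x" and g'="\<lambda>x. real (Suc m) * x ^ m"])
      show "(N \<longlongrightarrow> 0) (at_right 0)"
        using continuous_on_Icc_at_rightD[OF Ncont assms(5)] N0 s0 by simp
      have "((\<lambda>x::real. x ^ Suc m) \<longlongrightarrow> 0 ^ Suc m) (at_right 0)"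
        by (intro tendsto_intros)
      then show "((\<lambda>x. x ^ Suc m) \<longlongrightarrow> 0) (at_right (0::real))" by simp
      show "\<forall>\<^sub>F x in at_right 0. x ^ Suc m \<noteq> (0::real)"
        using eventually_at_right_less[of "0::real"] by eventually_elim auto
      show "\<forall>\<^sub>F x in at_right 0. real (Suc m) * x ^ m \<noteq> (0::real)"
        using eventually_at_right_less[of "0::real"] by eventually_elim auto
      show "\<forall>\<^sub>F x in at_right 0. (N has_real_derivative w x * q x) (at x)"
        using eventually_at_right_less[of "0::real"] by eventually_elim (use s0 Nder in auto)
      show "\<forall>\<^sub>F x in at_right 0. ((\<lambda>x. x ^ Suc m) has_real_derivative real (Suc m) * x ^ m) (at x)"
        by (intro always_eventually allI) (use DERIV_pow[of "Suc m"] in simp)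
      have "((\<lambda>x. (1+x)^n * q x / real (Suc m)) \<longlongrightarrow> (1+0)^n * q 0 / real (Suc m)) (at_right 0)"
        unfolding q_def by (auto intro!: tendsto_eq_intros)
      moreover have "(1+0)^n * q 0 / real (Suc m) = (\<mu> - n) / (m + 1)"
        by (simp add: q_def)
      moreover have "\<forall>\<^sub>F x in at_right 0. (1+x)^n * q x / real (Suc m) = w x * q x / (real (Suc m) * x ^ m)"
        using eventually_at_right_less[of "0::real"] by eventually_elim (auto simp: w_def)
      ultimately show "((\<lambda>x. w x * q x / (real (Suc m) * x ^ m)) \<longlongrightarrow> (\<mu> - n) / (m + 1)) (at_right 0)"
        using tendsto_cong by fastforce
    qed
    have "((\<lambda>x. q x - K x * x / (1+x)^n * (n/(1+x)) - m * (K x / (1+x)^n)) \<longlongrightarrow>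
           q 0 - (\<mu> - n) / (m + 1) * 0 / (1+0)^n * (n/(1+0)) - m * ((\<mu> - n) / (m + 1) / (1+0)^n)) (at_right 0)"
      unfolding q_def by (intro tendsto_intros Kl) auto
    moreover have "q 0 - (\<mu> - n) / (m + 1) * 0 / (1+0)^n * (n/(1+0)) - m * ((\<mu> - n) / (m + 1) / (1+0)^n) = L0"
      using False by (simp add: L0_def q_def field_simps)
    moreover have "\<forall>\<^sub>F x in at_right 0. q x - K x * x / (1+x)^n * (n/(1+x)) - m * (K x / (1+x)^n) = D x"
      using eventually_at_right_less[of "0::real"]
    proof eventually_elim
      case (elim x)
      have p1: "x ^ m > 0" "(1+x)^n > 0" "1 + x > 0" using elim by auto
      have "K x * x / (1+x)^n * (n/(1+x)) + m * (K x / (1+x)^n) = N x * r x / w x"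
        using alg1[of x "x^m" "(1+x)^n" "N x" n m] p1 elim unfolding K_def r_def w_def
        by (simp add: mult.commute)
      then show ?case by (simp add: D_def)
    qed
    ultimately show ?thesis using s0 tendsto_cong by fastforce
  qed
  have dlim: "((\<lambda>x. deriv (psi_tilde m n a b s) x) \<longlongrightarrow> L0) (at_right s)"
  proof -
    have "\<forall>\<^sub>F x in at_right s. D x = deriv (psi_tilde m n a b s) x"
      using eventually_at_right_less[of s] by eventually_elim (simp add: psider)
    then show ?thesis using Dlim tendsto_cong by fastforce
  qed
  have C12: "N x > 0" if h1: "\<mu> * (1 + s) \<ge> n" and hx: "s < x" for x
  proof -
    have "N s < N x"
    proof (rule DERIV_pos_imp_increasing_open[OF hx])
      fix t assume t: "s < t" "t < x"
      have "\<mu> * (1 + s) < \<mu> * (1 + t)" using mupos t by simp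
      then have "q t > 0" using h1 t assms by (simp add: q_def field_simps)
      moreover have "w t > 0" using wpos t assms by simp
      ultimately show "\<exists>y. (N has_real_derivative y) (at t) \<and> y > 0"
        using Nder t by (intro exI[of _ "w t * q t"]) auto
    qed (rule Ncont)
    then show ?thesis using N0 by simp
  qed
  have C12': "psi_tilde m n a b s x > 0" if h1: "\<mu> * (1 + s) \<ge> n" and hx: "s < x" for x
    using C12[OF h1 hx] wpos[of x] hx assms by (simp add: psi)
  have N12: "\<exists>x\<in>{s<..a}. psi_tilde m n a b s x < 0" if h1: "\<mu> * (1 + s) < n"
  proof -
    define t0 where "t0 = n / \<mu> - 1"
    have st0: "s < t0" using h1 mupos by (simp add: t0_def field_simps)
    define x where "x = min a ((s + t0) / 2)"
    have sx: "s < x" "x \<le> a" using st0 assms by (auto simp: x_def)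
    have "N s > N x"
    proof (rule DERIV_neg_imp_decreasing_open[OF sx(1)])
      fix t assume t: "s < t" "t < x"
      then have "t < t0" using st0 by (auto simp: x_def)
      then have "\<mu> * (1 + t) < n" using mupos by (simp add: t0_def field_simps)
      then have "q t < 0" using t assms by (simp add: q_def field_simps)
      moreover have "w t > 0" using wpos t assms by simp
      ultimately show "\<exists>y. (N has_real_derivative y) (at t) \<and> y < 0"
        using Nder t by (intro exI[of _ "w t * q t"]) (auto simp: mult_pos_neg)
    qed (rule Ncont)
    then have "N x < 0" using N0 by simp
    then have "psi_tilde m n a b s x < 0" using wpos[of x] sx assms by (simp add: psi divide_neg_pos)
    then show ?thesis using sx by auto
  qed
  have N13: "\<exists>x\<in>{s<..a}. deriv (psi_tilde m n a b s) x < 0" if h1: "\<mu> * (1 + s) < n"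
  proof -
    have "L0 < 0" using h1 L0nn by linarith
    then have "\<forall>\<^sub>F x in at_right s. deriv (psi_tilde m n a b s) x < 0"
      using order_tendstoD(2)[OF dlim] by blast
    then obtain c where c: "c > s" "\<And>y. s < y \<Longrightarrow> y < c \<Longrightarrow> deriv (psi_tilde m n a b s) y < 0"
      unfolding eventually_at_right_field by blast
    define x where "x = (s + min a c) / 2"
    have "s < x" "x \<le> a" "x < c" using c assms by (auto simp: x_def)
    then show ?thesis using c(2)[of x] by (intro bexI[of _ x]) auto
  qed
  define E where "E = (\<lambda>x. q x * w x - N x * r x)"
  have Eder: "(E has_real_derivative (n/(1+x)^2 * w x + N x * (n/(1+x)^2 + m/x^2))) (at x)"
    if "x > s" for x
  proof -
    have x0: "x > 0" using that assms by linarith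
    have qd: "(q has_real_derivative n/(1+x)^2) (at x)"
      unfolding q_def using x0 by (auto intro!: derivative_eq_intros simp: power2_eq_square)
    have rd: "(r has_real_derivative -(n/(1+x)^2) - m/x^2) (at x)"
      unfolding r_def using x0 by (auto intro!: derivative_eq_intros simp: power2_eq_square)
    have "(E has_real_derivative (n/(1+x)^2 * w x + (w x * r x) * q x) -
             (w x * q x * r x + (-(n/(1+x)^2) - m/x^2) * N x)) (at x)"
      unfolding E_def by (rule DERIV_diff[OF DERIV_mult[OF qd wder[OF x0]] DERIV_mult[OF Nder[OF that] rd]])
    then show ?thesis by (simp add: algebra_simps)
  qed
  have Einc: "E y < E x" if "s < y" "y < x" "x \<le> a" "\<mu> * (1 + s) \<ge> n" for x y
  proof (rule DERIV_pos_imp_increasing_open[OF that(2)])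
    fix t assume t: "y < t" "t < x"
    have "N t > 0" using C12 that t by simp
    moreover have "w t > 0" using wpos t that assms by simp
    moreover have "(n/(1+t)^2) > 0" using assms t that by simp
    moreover have "(n/(1+t)^2 + m/t^2) > 0" using assms t that
      by (intro add_pos_nonneg) auto
    ultimately have "n/(1+t)^2 * w t + N t * (n/(1+t)^2 + m/t^2) > 0"
      by (metis add_pos_pos mult_pos_pos)
    then show "\<exists>d. (E has_real_derivative d) (at t) \<and> d > 0"
      using Eder[of t] t that by auto
  next
    show "continuous_on {y..x} E"
    proof (intro continuous_at_imp_continuous_on ballI)
      fix z assume "z \<in> {y..x}"
      then have "z > s" using that by auto
      then show "isCont E z" using Eder DERIV_continuous by blast
    qed
  qed
  have C13: "deriv (psi_tilde m n a b s) x > 0" if h1: "\<mu> * (1 + s) \<ge> n" and hx: "s < x" "x \<le> a" for x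
  proof -
    have wl: "(w \<longlongrightarrow> w s) (at_right s)"
      unfolding w_def by (auto intro!: tendsto_eq_intros)
    have "\<forall>\<^sub>F z in at_right s. w z * D z = E z"
      using eventually_at_right_less[of s]
    proof eventually_elim
      case (elim z)
      then have "w z > 0" using wpos assms by simp
      then show ?case by (simp add: D_def E_def field_simps)
    qed
    then have El: "(E \<longlongrightarrow> w s * L0) (at_right s)"
      using tendsto_mult[OF wl Dlim] tendsto_cong by fastforce
    define y where "y = (s + x) / 2"
    have y: "s < y" "y < x" using hx by (auto simp: y_def)
    have "\<forall>\<^sub>F z in at_right s. E z \<le> E y"
      using eventually_at_right_field[of "\<lambda>z. E z \<le> E y" s] y Einc[of _ y] hx h1
      by (intro iffD2[OF eventually_at_right_field] exI[of _ y]) (auto intro: less_imp_le)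
    then have "w s * L0 \<le> E y"
      by (intro tendsto_le[OF trivial_limit_at_right_real tendsto_const El])
    moreover have "w s * L0 \<ge> 0" using L0nn h1 assms by (simp add: w_def)
    moreover have "E y < E x" using Einc y hx h1 by simp
    ultimately have "E x > 0" by linarith
    moreover have "w x > 0" using wpos hx assms by simp
    ultimately have "D x > 0" by (simp add: D_def E_def field_simps)
    then show ?thesis using psider hx by simp
  qed
  have limiff: "(\<exists>L. ((\<lambda>x. deriv (psi_tilde m n a b s) x) \<longlongrightarrow> L) (at_right s) \<and> L > 0)
            \<longleftrightarrow> \<mu> * (1 + s) > n"
  proof
    assume "\<exists>L. ((\<lambda>x. deriv (psi_tilde m n a b s) x) \<longlongrightarrow> L) (at_right s) \<and> L > 0"
    then obtain L where "((\<lambda>x. deriv (psi_tilde m n a b s) x) \<longlongrightarrow> L) (at_right s)" "L > 0" by blast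
    moreover have "L = L0" using tendsto_unique[OF trivial_limit_at_right_real calculation(1) dlim] .
    ultimately show "\<mu> * (1 + s) > n" using L0pos by simp
  next
    assume "\<mu> * (1 + s) > n"
    then show "\<exists>L. ((\<lambda>x. deriv (psi_tilde m n a b s) x) \<longlongrightarrow> L) (at_right s) \<and> L > 0"
      using dlim L0pos by blast
  qed
  have A: "(\<mu> * (1 + s) \<ge> n \<longleftrightarrow> (\<forall>x\<in>{s<..a}. psi_tilde m n a b s x > 0))"
    using C12' N12 by force
  have B: "(\<mu> * (1 + s) \<ge> n \<longleftrightarrow> (\<forall>x\<in>{s<..a}. deriv (psi_tilde m n a b s) x > 0))"
    using C13 N13 by force
  show ?thesis using A B limiff unfolding \<mu>_def by blast
qed

end
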